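(* For every even integer $s\ge4$ there exists a linear $(2,s-1,s,2)$-AONT.
   Context: A linear $(t_i,t_o,s,q)$-AONT is given by an invertible $s\times s$ matrix $M$ over $\mathbb{F}_q$ defining the map $\mathbf{x}\mapsto\mathbf{y}=\mathbf{x}M^{-1}$ on row vectors of $\mathbb{F}_q^s$, such that for every set $I$ of $t_i$ input coordinates and every set $J$ of $s-t_o$ output coordinates, the pair $((x_i)_{i\in I},(y_j)_{j\in J})$ takes every value in $\mathbb{F}_q^{t_i+s-t_o}$ equally often as $\mathbf{x}$ ranges over $\mathbb{F}_q^s$. Equivalently, $M$ is invertible and every $t_o\times t_i$ submatrix of $M$ has rank $t_i$. *)

theory Defs
  imports "Jordan_Normal_Form.DL_Rank" "Jordan_Normal_Form.DL_Submatrix"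
begin

definition linear_AONT :: "nat \<Rightarrow> nat \<Rightarrow> nat \<Rightarrow> nat \<Rightarrow> 'a::{finite,field} mat \<Rightarrow> bool" where
  "linear_AONT ti to s q M \<longleftrightarrow>
     card (UNIV :: 'a set) = q \<and> M \<in> carrier_mat s s \<and> invertible_mat M \<and>
     (\<forall>R C. R \<subseteq> {..<s} \<longrightarrow> C \<subseteq> {..<s} \<longrightarrow> card R = to \<longrightarrow> card C = ti \<longrightarrow>
        vec_space.rank to (submatrix M R C) = ti)"

end

theory Submission imports Defs begin

lemma two_eq_zero:
  assumes "card (UNIV :: 'a::{finite,field} set) = 2"
  shows "(2::'a) = 0"
proof (rule ccontr)
  assume h: "(2::'a) \<noteq> 0"
  have h2: "(2::'a) \<noteq> 1"
  proof
    assume "(2::'a) = 1"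
    then have "(1::'a) + 1 = 1 + 0" by simp
    then have "(1::'a) = 0" by (simp only: add_left_cancel)
    then show False by simp
  qed
  have "card {0::'a, 1, 2} = 3" using h h2 by simp
  moreover have "card {0::'a,1,2} \<le> card (UNIV::'a set)" by (rule card_mono) auto
  ultimately show False using assms by simp
qed

lemma of_nat_char2:
  assumes "(2::'a::field) = 0"
  shows "(of_nat n :: 'a) = (if even n then 0 else 1)"
proof (induction n)
  case (Suc n)
  have "(1::'a) + 1 = 0" using assms by simp
  then show ?case using Suc by (auto simp: add.commute)
qed simp

definition JI :: "nat \<Rightarrow> 'a::field mat" where
  "JI s = mat s s (\<lambda>(i,j). if i = j then 0 else 1)"

lemma JI_sq:
  assumes c2: "(2::'a::field) = 0" and "even s" "0 < s"
  shows "(JI s :: 'a mat) * JI s = 1\<^sub>m s"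
proof (rule eq_matI)
  fix i k assume ik: "i < dim_row (1\<^sub>m s :: 'a mat)" "k < dim_col (1\<^sub>m s :: 'a mat)"
  then have i: "i<s" and k: "k<s" by auto
  have "((JI s :: 'a mat) * JI s) $$ (i,k) = (\<Sum>j<s. (if i = j then 0 else 1) * (if j = k then 0 else 1) :: 'a)"
    using i k by (simp add: JI_def scalar_prod_def lessThan_atLeast0)
  also have "... = (\<Sum>j<s. if j \<noteq> i \<and> j \<noteq> k then 1 else 0)" by (rule sum.cong) auto
  also have "... = of_nat (card {j. j<s \<and> j \<noteq> i \<and> j \<noteq> k})" by (simp add: sum.If_cases Int_def)
  also have "{j. j<s \<and> j \<noteq> i \<and> j \<noteq> k} = {..<s} - {i,k}" by auto
  also have "card ({..<s} - {i,k}) = s - card {i,k}" using i k by (simp add: card_Diff_subset)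
  finally have e: "((JI s :: 'a mat) * JI s) $$ (i,k) = of_nat (s - card {i,k})" .
  show "((JI s :: 'a mat) * JI s) $$ (i,k) = 1\<^sub>m s $$ (i,k)"
  proof (cases "i = k")
    case True
    have "odd (s - 1)" using assms by simp
    then show ?thesis using e True i k by (simp only: of_nat_char2[OF c2]) simp
  next
    case False
    have "even (s - 2)" using assms by simp
    then show ?thesis using e False i k by (simp only: of_nat_char2[OF c2]) simp
  qed
qed (auto simp: JI_def)

lemma mv2:
  fixes B :: "'a::field mat"
  assumes "B \<in> carrier_mat n 2" "v \<in> carrier_vec 2" "a < n"
  shows "(B *\<^sub>v v) $ a = B $$ (a,0) * v $ 0 + B $$ (a,1) * v $ 1"
proof -
  have "(B *\<^sub>v v) $ a = row B a \<bullet> v" using assms by simp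
  also have "... = (\<Sum>i\<in>{0..<2}. row B a $ i * v $ i)" using assms by (simp add: scalar_prod_def)
  also have "... = row B a $ 0 * v $ 0 + row B a $ 1 * v $ 1" by (simp add: numeral_2_eq_2)
  finally show ?thesis using assms by simp
qed

lemma rank2:
  fixes B :: "'a::field mat"
  assumes B: "B \<in> carrier_mat n 2"
  and ker: "\<And>v. v \<in> carrier_vec 2 \<Longrightarrow> v \<noteq> 0\<^sub>v 2 \<Longrightarrow> B *\<^sub>v v \<noteq> 0\<^sub>v n"
  shows "vec_space.rank n B = 2"
proof -
  interpret vec_space "TYPE('a)" n .
  have cols: "cols B = [col B 0, col B 1]" using B by (simp add: cols_def numeral_2_eq_2)
  have dist: "distinct (cols B)"
  proof (rule ccontr)
    assume "\<not> distinct (cols B)"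
    then have eq: "col B 0 = col B 1" using cols by simp
    define v where "v = vec 2 (\<lambda>i. if i = 0 then 1 else - 1 :: 'a)"
    have vc: "v \<in> carrier_vec 2" by (simp add: v_def)
    have "B *\<^sub>v v = 0\<^sub>v n"
    proof (rule eq_vecI)
      fix a assume "a < dim_vec (0\<^sub>v n :: 'a vec)"
      then have a: "a < n" by simp
      have "col B 0 $ a = B $$ (a,0)" "col B 1 $ a = B $$ (a,1)" using a B by auto
      then have "B $$ (a,0) = B $$ (a,1)" using eq by simp
      then show "(B *\<^sub>v v) $ a = 0\<^sub>v n $ a" using a mv2[OF B vc a]
        by (simp add: v_def)
    qed (use B in auto)
    moreover have "v \<noteq> 0\<^sub>v 2"
    proof
      assume "v = 0\<^sub>v 2"
      then have "v $ 0 = 0" by simp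
      then show False by (simp add: v_def)
    qed
    ultimately show False using ker[OF vc] by simp
  qed
  have "lin_indpt (set (cols B))"
  proof
    assume "lin_dep (set (cols B))"
    then obtain v where "v \<in> carrier_vec 2" "v \<noteq> 0\<^sub>v 2" "B *\<^sub>v v = 0\<^sub>v n"
      using lin_depE[OF B _ dist] by blast
    then show False using ker by blast
  qed
  then show ?thesis using lin_indpt_full_rank[OF B dist] by blast
qed

lemma sub_rank:
  fixes R C :: "nat set"
  assumes R: "R \<subseteq> {..<s}" and C: "C \<subseteq> {..<s}" and cR: "card R = s - 1"
    and cC: "card C = 2" and s4: "4 \<le> s"
  shows "vec_space.rank (s-1) (submatrix (JI s :: 'a::field mat) R C) = 2"
proof -
  define M where "M = (JI s :: 'a mat)"
  have Mc: "M \<in> carrier_mat s s" by (simp add: M_def JI_def)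
  have finR: "finite R" using R finite_subset by blast
  have finC: "finite C" using C finite_subset by blast
  have dimr: "{i. i < dim_row M \<and> i \<in> R} = R" using R Mc by auto
  have dimc: "{i. i < dim_col M \<and> i \<in> C} = C" using C Mc by auto
  have dr: "dim_row (submatrix M R C) = s-1" unfolding dim_submatrix dimr cR ..
  have dc: "dim_col (submatrix M R C) = 2" unfolding dim_submatrix dimc cC ..
  have Bc: "submatrix M R C \<in> carrier_mat (s-1) 2" using dr dc by (rule carrier_matI)
  define c0 where "c0 = pick C 0"
  define c1 where "c1 = pick C 1"
  have c0C: "c0 \<in> C" unfolding c0_def by (rule pick_in_set_le) (simp add: cC)
  have c1C: "c1 \<in> C" unfolding c1_def by (rule pick_in_set_le) (simp add: cC)
  have c01: "c0 < c1"
  proof -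
    have "(1::nat) < card C" using cC by simp
    moreover have "(0::nat) < 1" by simp
    ultimately show ?thesis unfolding c0_def c1_def by (rule pick_mono_le)
  qed
  have entry: "submatrix M R C $$ (a, j) = M $$ (pick R a, pick C j)" if "a < s-1" "j < 2" for a j
    by (rule submatrix_index) (use that in \<open>simp_all add: dimr dimc cR cC\<close>)
  have pickR: "pick R a \<in> R" if "a < s - 1" for a
    by (rule pick_in_set_le) (use that cR in simp)
  have rowpick: "\<exists>a<s-1. pick R a = \<rho>" if "\<rho> \<in> R" for \<rho>
  proof -
    have "{x\<in>R. x<\<rho>} \<subset> R" using that by auto
    then have "card {x\<in>R. x<\<rho>} < card R" using finR by (rule psubset_card_mono[rotated])
    then have "card {x\<in>R. x<\<rho>} < s - 1" using cR by simp
    moreover have "pick R (card {x\<in>R. x<\<rho>}) = \<rho>" by (rule pick_card_in_set[OF that])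
    ultimately show ?thesis by blast
  qed
  have mv: "(submatrix M R C *\<^sub>v v) $ a = (if pick R a = c0 then 0 else 1) * v$0 + (if pick R a = c1 then 0 else 1) * v$1"
    if "a < s-1" "v \<in> carrier_vec 2" for a v
  proof -
    have "pick R a < s" using pickR[OF that(1)] R by auto
    moreover have "c0 < s" "c1 < s" using c0C c1C C by auto
    ultimately show ?thesis using mv2[OF Bc that(2) that(1)] entry[OF that(1)]
      by (simp add: M_def JI_def c0_def c1_def)
  qed
  show ?thesis unfolding M_def[symmetric]
  proof (rule rank2[OF Bc])
    fix v :: "'a vec" assume v: "v \<in> carrier_vec 2" "v \<noteq> 0\<^sub>v 2"
    have nz: "v$0 \<noteq> 0 \<or> v$1 \<noteq> 0"
    proof (rule ccontr)
      assume "\<not> (v$0 \<noteq> 0 \<or> v$1 \<noteq> 0)"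
      then have "v = 0\<^sub>v 2" using v(1)
        by (intro eq_vecI) (auto simp: less_2_cases_iff)
      then show False using v(2) by simp
    qed
    have big: "\<exists>\<rho>\<in>R. \<rho> \<noteq> c" for c
    proof (rule ccontr)
      assume "\<not> (\<exists>\<rho>\<in>R. \<rho> \<noteq> c)"
      then have "R \<subseteq> {c}" by auto
      then have "card R \<le> 1" using card_mono[of "{c}" R] by simp
      then show False using cR s4 by simp
    qed
    have one: "c0 \<in> R \<or> c1 \<in> R"
    proof (rule ccontr)
      assume "\<not> (c0 \<in> R \<or> c1 \<in> R)"
      then have "R \<subseteq> {..<s} - {c0,c1}" using R by auto
      then have "card R \<le> card ({..<s} - {c0,c1})" by (intro card_mono) auto
      also have "... = card {..<s} - card {c0,c1}" using c0C c1C C by (intro card_Diff_subset) auto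
      also have "... = s - 2" using c01 by simp
      finally show False using cR s4 by simp
    qed
    have ex: "\<exists>\<rho>\<in>R. (if \<rho> = c0 then 0 else 1) * v$0 + (if \<rho> = c1 then 0 else 1) * v$1 \<noteq> 0"
    proof (cases "v$1 \<noteq> 0 \<and> c0 \<in> R")
      case True
      then show ?thesis using c01 by (intro bexI[of _ c0]) auto
    next
      case F1: False
      show ?thesis
      proof (cases "v$0 \<noteq> 0 \<and> c1 \<in> R")
        case True
        then show ?thesis using c01 by (intro bexI[of _ c1]) auto
      next
        case F2: False
        show ?thesis
        proof (cases "v$0 = 0")
          case True
          obtain \<rho> where "\<rho> \<in> R" "\<rho> \<noteq> c1" using big by blast
          then show ?thesis using True nz by (intro bexI[of _ \<rho>]) auto
        next
          case False
          then have "v$1 = 0" using F1 F2 one by auto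
          obtain \<rho> where "\<rho> \<in> R" "\<rho> \<noteq> c0" using big by blast
          then show ?thesis using False \<open>v$1 = 0\<close> by (intro bexI[of _ \<rho>]) auto
        qed
      qed
    qed
    then obtain \<rho> where r: "\<rho> \<in> R" "(if \<rho> = c0 then 0 else 1) * v$0 + (if \<rho> = c1 then 0 else 1) * v$1 \<noteq> 0"
      by blast
    obtain a where a: "a < s-1" "pick R a = \<rho>" using rowpick[OF r(1)] by blast
    have "(submatrix M R C *\<^sub>v v) $ a \<noteq> 0" using mv[OF a(1) v(1)] a(2) r(2) by simp
    then show "submatrix M R C *\<^sub>v v \<noteq> 0\<^sub>v (s-1)" using a(1) by auto
  qed
qed

theorem mainTheorem13:
  assumes "card (UNIV :: 'a::{finite,field} set) = 2"
    and "even s" and "4 \<le> s"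
  shows "\<exists>M :: 'a mat. linear_AONT 2 (s - 1) s 2 M"
proof (intro exI)
  have c2: "(2::'a) = 0" using two_eq_zero[OF assms(1)] .
  have Mc: "(JI s :: 'a mat) \<in> carrier_mat s s" by (simp add: JI_def)
  have sq: "(JI s :: 'a mat) * JI s = 1\<^sub>m s" using JI_sq[OF c2 assms(2)] assms(3) by simp
  have inv: "invertible_mat (JI s :: 'a mat)"
    unfolding invertible_mat_def inverts_mat_def using sq Mc by auto
  show "linear_AONT 2 (s - 1) s 2 (JI s :: 'a mat)"
    unfolding linear_AONT_def
  proof (intro conjI allI impI)
    fix R C :: "nat set"
    assume "R \<subseteq> {..<s}" "C \<subseteq> {..<s}" "card R = s - 1" "card C = 2"
    then show "vec_space.rank (s - 1) (submatrix (JI s :: 'a mat) R C) = 2"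
      using sub_rank assms(3) by blast
  qed (use assms(1) Mc inv in auto)
qed

end
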